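(* Let $n\ge 2$, let $f:\{0,1\}^n\to\{0,1\}^n$ and $\alpha\in\{0,1\}$. Then every arc of $G(f^\alpha)$ (with its sign) is an arc of $G(f)$, i.e. $G(f^\alpha)$ is a subgraph of $G(f)$. Furthermore, if $G(f)$ has no arc from vertex $n$ to a vertex $i\neq n$, then $G(f^\alpha)=G(f)\setminus n$, the signed graph obtained from $G(f)$ by removing vertex $n$ and all arcs having $n$ as initial or final vertex.
   Context: For $x\in\{0,1\}^m$ and $j\in\{1,\dots,m\}$, $\overline{x}^j$ denotes $x$ with its $j$-th component switched. For $g=(g_1,\dots,g_m):\{0,1\}^m\to\{0,1\}^m$, the discrete Jacobian entries are $g_{ij}(x)=\frac{g_i(\overline{x}^j)-g_i(x)}{\overline{x}^j_j-x_j}\in\{-1,0,1\}$. The interaction graph $G(g)$ is the signed directed graph with vertex set $\{1,\dots,m\}$ having an arc from $j$ to $i$ of sign $s\in\{-1,1\}$ whenever $g_{ij}(x)=s$ for at least one $x\in\{0,1\}^m$ (both a positive and a negative arc between the same pair are allowed). For $\alpha\in\{0,1\}$, $f^\alpha:\{0,1\}^{n-1}\to\{0,1\}^{n-1}$ is defined by $f^\alpha(x)=(f_1(x,\alpha),\dots,f_{n-1}(x,\alpha))$. *)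

theory Defs
  imports Main
begin

text \<open>A point of {0,1}^m is encoded as a function nat => bool whose components
  are indexed by 1..m (True = 1, False = 0) and which is False outside 1..m.\<close>

definition bstates :: "nat \<Rightarrow> (nat \<Rightarrow> bool) set" where
  "bstates m = {x. \<forall>i. x i \<longrightarrow> 1 \<le> i \<and> i \<le> m}"

definition switch :: "(nat \<Rightarrow> bool) \<Rightarrow> nat \<Rightarrow> (nat \<Rightarrow> bool)" where
  "switch x j = x(j := \<not> x j)"

definition djac :: "((nat \<Rightarrow> bool) \<Rightarrow> (nat \<Rightarrow> bool)) \<Rightarrow> nat \<Rightarrow> nat \<Rightarrow> (nat \<Rightarrow> bool) \<Rightarrow> int" where
  "djac g i j x =
     (of_bool (g (switch x j) i) - of_bool (g x i)) div (of_bool (switch x j j) - of_bool (x j))"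

text \<open>signed arcs (j, i, s) of the interaction graph G(g) of g : {0,1}^m -> {0,1}^m:
  an arc from j to i of sign s\<close>
definition arcs :: "nat \<Rightarrow> ((nat \<Rightarrow> bool) \<Rightarrow> (nat \<Rightarrow> bool)) \<Rightarrow> (nat \<times> nat \<times> int) set" where
  "arcs m g = {(j, i, s). j \<in> {1..m} \<and> i \<in> {1..m} \<and> s \<in> {-1, 1} \<and>
                          (\<exists>x\<in>bstates m. djac g i j x = s)}"

definition fixlast :: "nat \<Rightarrow> ((nat \<Rightarrow> bool) \<Rightarrow> (nat \<Rightarrow> bool)) \<Rightarrow> bool \<Rightarrow> ((nat \<Rightarrow> bool) \<Rightarrow> (nat \<Rightarrow> bool))" where
  "fixlast n f \<alpha> = (\<lambda>x i. if 1 \<le> i \<and> i \<le> n - 1 then f (x(n := \<alpha>)) i else False)"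

end

theory Submission
  imports Defs
begin

lemma djac_eq: "djac g i j x = (if x j then of_bool (g x i) - of_bool (g (switch x j) i)
                                else of_bool (g (switch x j) i) - of_bool (g x i))"
  unfolding djac_def switch_def by auto

lemma switch_bst: "x \<in> bstates m \<Longrightarrow> j \<in> {1..m} \<Longrightarrow> switch x j \<in> bstates m"
  unfolding bstates_def switch_def by auto

lemma indep_n:
  assumes h: "\<forall>i s. i \<noteq> n \<longrightarrow> (n, i, s) \<notin> arcs n f" and n: "n \<ge> 1"
    and i: "i \<in> {1..n}" "i \<noteq> n" and z: "z \<in> bstates n"
  shows "f (switch z n) i = f z i"
proof (rule ccontr)
  assume ne: "f (switch z n) i \<noteq> f z i"
  let ?s = "djac f i n z"
  have "?s \<in> {-1,1}" using ne by (auto simp: djac_eq)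
  hence "(n, i, ?s) \<in> arcs n f" using i z n unfolding arcs_def by auto
  thus False using h i by blast
qed

theorem lemma1:
  fixes n :: nat and f :: "(nat \<Rightarrow> bool) \<Rightarrow> (nat \<Rightarrow> bool)" and \<alpha> :: bool
  assumes "n \<ge> 2"
    and "\<forall>x\<in>bstates n. f x \<in> bstates n"
  shows "arcs (n - 1) (fixlast n f \<alpha>) \<subseteq> arcs n f
    \<and> ((\<forall>i s. i \<noteq> n \<longrightarrow> (n, i, s) \<notin> arcs n f) \<longrightarrow>
         arcs (n - 1) (fixlast n f \<alpha>) = {(j, i, s) \<in> arcs n f. j \<noteq> n \<and> i \<noteq> n})"
proof -
  have key: "djac (fixlast n f \<alpha>) i j x = djac f i j (x(n := \<alpha>))"
    if "i \<in> {1..n-1}" "j \<in> {1..n-1}" for i j x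
  proof -
    have jn: "j \<noteq> n" using that assms(1) by auto
    have "(switch x j)(n := \<alpha>) = switch (x(n := \<alpha>)) j"
      using jn unfolding switch_def by (auto simp: fun_eq_iff)
    thus ?thesis using that jn unfolding djac_eq fixlast_def by (auto simp: switch_def)
  qed
  have bst: "x(n := \<alpha>) \<in> bstates n" if "x \<in> bstates (n-1)" for x
    using that assms(1) unfolding bstates_def by auto
  have sub: "arcs (n - 1) (fixlast n f \<alpha>) \<subseteq> {(j, i, s) \<in> arcs n f. j \<noteq> n \<and> i \<noteq> n}"
  proof
    fix a assume "a \<in> arcs (n - 1) (fixlast n f \<alpha>)"
    then obtain j i s x where a: "a = (j,i,s)" "j \<in> {1..n-1}" "i \<in> {1..n-1}" "s \<in> {-1,1}"
      "x \<in> bstates (n-1)" "djac (fixlast n f \<alpha>) i j x = s"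
      unfolding arcs_def by auto
    have "djac f i j (x(n := \<alpha>)) = s" using key a by simp
    thus "a \<in> {(j, i, s) \<in> arcs n f. j \<noteq> n \<and> i \<noteq> n}"
      using a bst[OF a(5)] assms(1) unfolding arcs_def by auto
  qed
  have sup: "{(j, i, s) \<in> arcs n f. j \<noteq> n \<and> i \<noteq> n} \<subseteq> arcs (n - 1) (fixlast n f \<alpha>)"
    if h: "\<forall>i s. i \<noteq> n \<longrightarrow> (n, i, s) \<notin> arcs n f"
  proof
    fix a assume "a \<in> {(j, i, s) \<in> arcs n f. j \<noteq> n \<and> i \<noteq> n}"
    then obtain j i s y where a: "a = (j,i,s)" "j \<in> {1..n}" "i \<in> {1..n}" "s \<in> {-1,1}"
      "y \<in> bstates n" "djac f i j y = s" "j \<noteq> n" "i \<noteq> n"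
      unfolding arcs_def by auto
    define x where "x = y(n := False)"
    have xb: "x \<in> bstates (n-1)" using a(5) unfolding x_def bstates_def
      by (auto simp: le_diff_conv2)
    have ij: "i \<in> {1..n-1}" "j \<in> {1..n-1}" using a by auto
    have eq: "djac f i j (x(n := \<alpha>)) = s"
    proof (cases "y n = \<alpha>")
      case True
      hence "x(n := \<alpha>) = y" unfolding x_def by auto
      thus ?thesis using a by simp
    next
      case False
      hence yy: "x(n := \<alpha>) = switch y n" unfolding x_def switch_def by (auto simp: fun_eq_iff)
      have n1: "n \<ge> 1" using assms(1) by simp
      have e1: "f (switch y n) i = f y i" using indep_n[OF h n1 a(3) a(8) a(5)] .
      have sb: "switch y j \<in> bstates n" using switch_bst a by auto
      have e2: "f (switch (switch y j) n) i = f (switch y j) i"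
        using indep_n[OF h n1 a(3) a(8) sb] .
      have sw: "switch (switch y n) j = switch (switch y j) n"
        using a(7) unfolding switch_def by (auto simp: fun_eq_iff)
      have "switch y n j = y j" using a(7) unfolding switch_def by auto
      hence "djac f i j (switch y n) = djac f i j y"
        unfolding djac_eq using e1 e2 sw by simp
      then show ?thesis using a(6) yy by simp
    qed
    show "a \<in> arcs (n - 1) (fixlast n f \<alpha>)"
      using key[OF ij] eq xb a ij unfolding arcs_def by auto
  qed
  show ?thesis using sub sup by blast
qed

end
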